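(* For any $\rho\in(0,\frac\pi2)$ and all $\tilde\theta\in\mathbb S(\rho)$, $$\sin(\rho)\lambda_2I\le\nabla^2U(\tilde\theta)\le\lambda_NI,$$ where $\lambda_2$ and $\lambda_N$ are the second-smallest and largest eigenvalues of $M^{-1}L_B$, respectively.
   Context: Let $(\mathcal N,\mathcal E)$ be a connected undirected graph, $\mathcal N=\{1,\dots,N\}$, $E=|\mathcal E|$, with edge weights $B^0_{ij}>0$. Fix an edge orientation, let $A\in\mathbb R^{N\times E}$ be the node-edge incidence matrix, $\Gamma=\mathrm{diag}(B^0_{ij},\{i,j\}\in\mathcal E)$ and $L_B=A\Gamma A^T$. Let $M=\mathrm{diag}(M_1,\dots,M_N)$ with $M_i>0$ and $Y\in\mathbb R^{N\times(N-1)}$ a matrix whose columns form an orthonormal basis of the null space of $\mathbb 1_N^TM^{1/2}$. Define $U(\tilde\theta):=-\mathbb 1_E^T\Gamma\cos(A^TM^{-1/2}Y\tilde\theta)$ for $\tilde\theta\in\mathbb R^{N-1}$ (cosine elementwise), whose Hessian is $\nabla^2U(\tilde\theta)=Y^TM^{-1/2}A\,\mathrm{diag}(\Gamma\cos(A^TM^{-1/2}Y\tilde\theta))A^TM^{-1/2}Y$. For $\rho\in(0,\frac\pi2)$, $\mathbb S(\rho):=\{\tilde\theta:\max_l|(A^TM^{-1/2}Y\tilde\theta)_l|<\frac\pi2-\rho\}$. For symmetric matrices, $A\le B$ means $B-A$ is positive semidefinite. *)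

theory Defs
  imports "Jordan_Normal_Form.Char_Poly" "HOL-Computational_Algebra.Polynomial"
begin

text \<open>Nodes are 0..N-1; the oriented edge set is a list es of pairs (tail, head);
  edge l has weight w l (this is B^0 of that edge).\<close>

definition incidence :: "nat \<Rightarrow> (nat \<times> nat) list \<Rightarrow> real mat" where
  "incidence N es = mat N (length es)
     (\<lambda>(i,l). if i = fst (es ! l) then 1 else if i = snd (es ! l) then -1 else 0)"

definition simple_graph :: "nat \<Rightarrow> (nat \<times> nat) list \<Rightarrow> bool" where
  "simple_graph N es \<longleftrightarrow>
     (\<forall>l < length es. fst (es ! l) < N \<and> snd (es ! l) < N \<and> fst (es ! l) \<noteq> snd (es ! l)) \<and>
     (\<forall>l < length es. \<forall>l' < length es. l \<noteq> l' \<longrightarrow>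
        {fst (es ! l), snd (es ! l)} \<noteq> {fst (es ! l'), snd (es ! l')})"

definition adj_rel :: "(nat \<times> nat) list \<Rightarrow> (nat \<times> nat) set" where
  "adj_rel es = set es \<union> (set es)\<inverse>"

definition graph_connected :: "nat \<Rightarrow> (nat \<times> nat) list \<Rightarrow> bool" where
  "graph_connected N es \<longleftrightarrow> (\<forall>i < N. \<forall>j < N. (i, j) \<in> (adj_rel es)\<^sup>*)"

definition diag_mat :: "nat \<Rightarrow> (nat \<Rightarrow> real) \<Rightarrow> real mat" where
  "diag_mat n d = mat n n (\<lambda>(i,j). if i = j then d i else 0)"

definition Gam :: "(nat \<times> nat) list \<Rightarrow> (nat \<Rightarrow> real) \<Rightarrow> real mat" where
  "Gam es w = diag_mat (length es) w"

definition laplB :: "nat \<Rightarrow> (nat \<times> nat) list \<Rightarrow> (nat \<Rightarrow> real) \<Rightarrow> real mat" where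
  "laplB N es w = incidence N es * Gam es w * (incidence N es)\<^sup>T"

definition Mhalf :: "nat \<Rightarrow> (nat \<Rightarrow> real) \<Rightarrow> real mat" where
  "Mhalf N m = diag_mat N (\<lambda>i. sqrt (m i))"

definition Mmhalf :: "nat \<Rightarrow> (nat \<Rightarrow> real) \<Rightarrow> real mat" where
  "Mmhalf N m = diag_mat N (\<lambda>i. 1 / sqrt (m i))"

definition Minv :: "nat \<Rightarrow> (nat \<Rightarrow> real) \<Rightarrow> real mat" where
  "Minv N m = diag_mat N (\<lambda>i. 1 / m i)"

text \<open>Eigenvalues of a real square matrix, counted with algebraic multiplicity
  (real roots of the characteristic polynomial), in increasing order.
  eig_sorted A ! 1 is the second smallest, last (eig_sorted A) the largest.\<close>
definition eig_sorted :: "real mat \<Rightarrow> real list" where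
  "eig_sorted A = sorted_list_of_multiset (proots (char_poly A))"

text \<open>Hessian of U, as given by the closed form in the paper.\<close>
definition hessU :: "nat \<Rightarrow> (nat \<times> nat) list \<Rightarrow> (nat \<Rightarrow> real) \<Rightarrow> (nat \<Rightarrow> real) \<Rightarrow> real mat
    \<Rightarrow> real vec \<Rightarrow> real mat" where
  "hessU N es w m Y th =
     (let A = incidence N es;
          phi = A\<^sup>T * Mmhalf N m * Y *\<^sub>v th;
          D = diag_mat (length es) (\<lambda>l. w l * cos (phi $ l))
      in Y\<^sup>T * Mmhalf N m * A * D * A\<^sup>T * Mmhalf N m * Y)"

definition S_rho :: "nat \<Rightarrow> (nat \<times> nat) list \<Rightarrow> (nat \<Rightarrow> real) \<Rightarrow> real mat \<Rightarrow> real \<Rightarrow> real vec set" where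
  "S_rho N es m Y \<rho> = {th. th \<in> carrier_vec (N - 1) \<and>
     (\<forall>l < length es. \<bar>((incidence N es)\<^sup>T * Mmhalf N m * Y *\<^sub>v th) $ l\<bar> < pi / 2 - \<rho>)}"

definition psd :: "nat \<Rightarrow> real mat \<Rightarrow> bool" where
  "psd n P \<longleftrightarrow> P \<in> carrier_mat n n \<and> P\<^sup>T = P \<and>
     (\<forall>x \<in> carrier_vec n. x \<bullet> (P *\<^sub>v x) \<ge> 0)"

definition loewner_le :: "nat \<Rightarrow> real mat \<Rightarrow> real mat \<Rightarrow> bool" where
  "loewner_le n A B \<longleftrightarrow> psd n (B - A)"

end

theory Submission
  imports Defs "Jordan_Normal_Form.Spectral_Radius" "Jordan_Normal_Form.Schur_Decomposition"
begin


lemma real_sym_eigenvalue: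
  fixes K :: "real mat"
  assumes K: "K \<in> carrier_mat n n" and sym: "K\<^sup>T = K" and n: "n > 0"
  shows "\<exists>e. eigenvalue K e"
proof -
  define Kc where "Kc = map_mat complex_of_real K"
  have Kc: "Kc \<in> carrier_mat n n" using K unfolding Kc_def by auto
  from spectrum_non_empty[OF Kc n] obtain l where "eigenvalue Kc l"
    unfolding spectrum_def by auto
  then obtain v where ev: "eigenvector Kc v l" unfolding eigenvalue_def by auto
  hence v: "v \<in> carrier_vec n" "v \<noteq> 0\<^sub>v n" and Kv: "Kc *\<^sub>v v = l \<cdot>\<^sub>v v"
    using Kc unfolding eigenvector_def by auto
  have Kij: "\<And>i j. i < n \<Longrightarrow> j < n \<Longrightarrow> Kc $$ (i,j) = complex_of_real (K $$ (i,j))"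
    using K unfolding Kc_def by auto
  have symK: "\<And>i j. i < n \<Longrightarrow> j < n \<Longrightarrow> K $$ (i,j) = K $$ (j,i)"
    using sym K by (metis carrier_matD index_transpose_mat(1))
  have row: "\<And>i. i < n \<Longrightarrow> (\<Sum>j<n. Kc $$ (i,j) * v $ j) = l * v $ i"
  proof -
    fix i assume i: "i < n"
    have "(Kc *\<^sub>v v) $ i = l * v $ i" using Kv i v by simp
    moreover have "(Kc *\<^sub>v v) $ i = (\<Sum>j<n. Kc $$ (i,j) * v $ j)"
      using i Kc v by (auto simp: scalar_prod_def row_def lessThan_atLeast0)
    ultimately show "(\<Sum>j<n. Kc $$ (i,j) * v $ j) = l * v $ i" by simp
  qed
  define S where "S = (\<Sum>i<n. cnj (v $ i) * (\<Sum>j<n. Kc $$ (i,j) * v $ j))"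
  define r where "r = (\<Sum>i<n. cnj (v $ i) * v $ i)"
  have "S = (\<Sum>i<n. cnj (v $ i) * (l * v $ i))" unfolding S_def
    by (rule sum.cong, auto simp: row)
  hence S1: "S = l * r" unfolding r_def
    by (simp add: sum_distrib_left algebra_simps)
  have "cnj S = (\<Sum>i<n. v $ i * (\<Sum>j<n. complex_of_real (K $$ (i,j)) * cnj (v $ j)))"
    unfolding S_def cnj_sum by (auto simp: Kij intro!: sum.cong)
  also have "\<dots> = (\<Sum>i<n. \<Sum>j<n. complex_of_real (K $$ (i,j)) * v $ i * cnj (v $ j))"
    by (simp add: sum_distrib_left algebra_simps)
  also have "\<dots> = (\<Sum>j<n. \<Sum>i<n. complex_of_real (K $$ (i,j)) * v $ i * cnj (v $ j))"
    by (rule sum.swap)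
  also have "\<dots> = S" unfolding S_def
    by (auto simp: sum_distrib_left algebra_simps Kij symK intro!: sum.cong)
  finally have cS: "cnj S = S" .
  have rr: "r = complex_of_real (\<Sum>i<n. (cmod (v $ i))\<^sup>2)"
    unfolding r_def of_real_sum
    by (rule sum.cong, simp, metis complex_norm_square mult.commute of_real_power)
  obtain i where i: "i < n" "v $ i \<noteq> 0" using v by (metis eq_vecI carrier_vecD index_zero_vec)
  have "(\<Sum>i<n. (cmod (v $ i))\<^sup>2) > 0"
    by (rule sum_pos2[of _ i], insert i, auto)
  then obtain rr' where rr': "r = complex_of_real rr'" "rr' > 0" using rr by blast
  have "cnj (l * r) = l * r" using cS S1 by simp
  hence "cnj l * r = l * r" using rr'(1) by simp
  hence cl: "cnj l = l" using rr' by auto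
  have "Im (cnj l) = Im l" using cl by simp
  hence "Im l = 0" by simp
  hence lre: "l = complex_of_real (Re l)" by (simp add: complex_eq_iff)
  have "poly (char_poly Kc) l = 0"
    using \<open>eigenvalue Kc l\<close> eigenvalue_root_char_poly[OF Kc] by auto
  moreover have "char_poly Kc = map_poly complex_of_real (char_poly K)"
    unfolding Kc_def by (rule of_real_hom.char_poly_hom[OF K])
  ultimately have "complex_of_real (poly (char_poly K) (Re l)) = 0"
    by (metis lre of_real_hom.poly_map_poly)
  hence "poly (char_poly K) (Re l) = 0" by simp
  thus ?thesis using eigenvalue_root_char_poly[OF K] by auto
qed

lemma conj_real_vec[simp]: "conjugate (x::real vec) = x"
  by (rule eq_vecI, auto)

lemma real_sprod_self_ge0: "(x::real vec) \<bullet> x \<ge> 0"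
  using conjugate_square_ge_0_vec[of x] by simp

lemma orthonormal_completion:
  fixes v :: "real vec"
  assumes v: "v \<in> carrier_vec n" and v1: "v \<bullet> v = 1"
  shows "\<exists>W \<in> carrier_mat n n. W\<^sup>T * W = 1\<^sub>m n \<and> col W 0 = v"
proof -
  have v0: "v \<noteq> 0\<^sub>v n" using v1 v by auto
  interpret cof_vec_space n "TYPE(real)" .
  define b where "b = basis_completion v"
  define ws where "ws = gram_schmidt n b"
  from basis_completion[OF v v0, folded b_def]
  have dist_b: "distinct b" and indep: "\<not> lin_dep (set b)" and b: "set b \<subseteq> carrier_vec n" and hdb: "hd b = v"
    and len_b: "length b = n" by auto
  have n: "n > 0" using v0 v by (metis carrier_vecD gr0I vec_of_dim_0)
  from hdb len_b n obtain vs where bv: "b = v # vs" by (cases b, auto)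
  from gram_schmidt_result[OF b dist_b indep refl, folded ws_def]
  have ws: "set ws \<subseteq> carrier_vec n" "corthogonal ws" "length ws = n" 
    by (auto simp: len_b)
  from gram_schmidt_hd[OF v, of vs, folded bv] have hdws: "hd ws = v" unfolding ws_def .
  define us where "us = map (\<lambda>w. (1 / sqrt (w \<bullet> w)) \<cdot>\<^sub>v w) ws"
  have wsc: "\<And>i. i < n \<Longrightarrow> ws ! i \<in> carrier_vec n" using ws by auto
  have wsij: "\<And>i j. i < n \<Longrightarrow> j < n \<Longrightarrow> (ws ! i \<bullet> ws ! j = 0) = (i \<noteq> j)"
    using ws(2,3) unfolding corthogonal_def by auto
  have wspos: "\<And>i. i < n \<Longrightarrow> ws ! i \<bullet> ws ! i > 0"
    using wsij real_sprod_self_ge0 by (metis less_eq_real_def)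
  have usc: "\<And>i. i < n \<Longrightarrow> us ! i \<in> carrier_vec n" using wsc ws(3) unfolding us_def by auto
  have usij: "\<And>i j. i < n \<Longrightarrow> j < n \<Longrightarrow> us ! i \<bullet> us ! j = (if i = j then 1 else 0)"
  proof -
    fix i j assume i: "i < n" and j: "j < n"
    have "us ! i \<bullet> us ! j = (1 / sqrt (ws ! i \<bullet> ws ! i)) * (1 / sqrt (ws ! j \<bullet> ws ! j)) * (ws ! i \<bullet> ws ! j)"
      unfolding us_def using i j ws(3) wsc[OF i] wsc[OF j] by simp
    thus "us ! i \<bullet> us ! j = (if i = j then 1 else 0)"
      using wsij[OF i j] wspos[OF i] wspos[OF j]
      by (cases "i = j", auto simp: real_sqrt_mult[symmetric])
  qed
  have lus: "length us = n" using ws(3) unfolding us_def by simp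
  define W where "W = mat_of_cols n us"
  have W: "W \<in> carrier_mat n n" unfolding W_def using lus by auto
  have colW: "\<And>i. i < n \<Longrightarrow> col W i = us ! i" unfolding W_def using lus usc
    by (intro col_mat_of_cols, auto)
  have "W\<^sup>T * W = 1\<^sub>m n"
    by (rule eq_matI, insert W, auto simp: colW usij)
  moreover have "col W 0 = v"
  proof -
    have "ws ! 0 = v" using hdws ws(3) n by (metis hd_conv_nth length_0_conv less_numeral_extra(3))
    hence "us ! 0 = (1 / sqrt (v \<bullet> v)) \<cdot>\<^sub>v v" unfolding us_def using ws(3) n by simp
    thus ?thesis using colW[OF n] v1 by simp
  qed
  ultimately show ?thesis using W by blast
qed

lemma real_sprod_pos: "(x::real vec) \<in> carrier_vec n \<Longrightarrow> x \<noteq> 0\<^sub>v n \<Longrightarrow> x \<bullet> x > 0"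
  using conjugate_square_greater_0_vec[of x n] by simp

lemma spectral_real:
  fixes K :: "real mat"
  assumes "K \<in> carrier_mat n n" "K\<^sup>T = K"
  shows "\<exists>U d. U \<in> carrier_mat n n \<and> U\<^sup>T * U = 1\<^sub>m n \<and> length d = n \<and>
     K = U * diag_mat n (\<lambda>i. d ! i) * U\<^sup>T"
  using assms
proof (induction n arbitrary: K)
  case 0
  show ?case
    by (rule exI[of _ "1\<^sub>m 0"], rule exI[of _ "[]"], insert 0, auto intro!: eq_matI simp: diag_mat_def)
next
  case (Suc m)
  let ?n = "Suc m"
  have K: "K \<in> carrier_mat ?n ?n" and symK: "K\<^sup>T = K" by fact+
  obtain e where "eigenvalue K e" using real_sym_eigenvalue[OF K symK] by auto
  from find_eigenvector[OF K this] have "eigenvector K (find_eigenvector K e) e" .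
  then obtain v0 where v0: "v0 \<in> carrier_vec ?n" "v0 \<noteq> 0\<^sub>v ?n" "K *\<^sub>v v0 = e \<cdot>\<^sub>v v0"
    unfolding eigenvector_def using K by auto
  define v where "v = (1 / sqrt (v0 \<bullet> v0)) \<cdot>\<^sub>v v0"
  have vpos: "v0 \<bullet> v0 > 0" using real_sprod_pos[OF v0(1,2)] .
  have v: "v \<in> carrier_vec ?n" unfolding v_def using v0 by auto
  have v1: "v \<bullet> v = 1" unfolding v_def using v0(1) vpos
    by (simp add: real_sqrt_mult[symmetric])
  have Kv: "K *\<^sub>v v = e \<cdot>\<^sub>v v" unfolding v_def using v0 K
    by (simp add: mult_mat_vec smult_smult_assoc mult.commute)
  obtain W where W: "W \<in> carrier_mat ?n ?n" and WtW: "W\<^sup>T * W = 1\<^sub>m ?n" and colW: "col W 0 = v"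
    using orthonormal_completion[OF v v1] by auto
  have Wt: "W\<^sup>T \<in> carrier_mat ?n ?n" using W by auto
  have WWt: "W * W\<^sup>T = 1\<^sub>m ?n" using mat_mult_left_right_inverse[OF Wt W WtW] .
  define A' where "A' = W\<^sup>T * K * W"
  have A': "A' \<in> carrier_mat ?n ?n" unfolding A'_def using W K by auto
  have symA': "A'\<^sup>T = A'" unfolding A'_def
    using W K symK by (simp add: transpose_mult[of _ ?n ?n _ ?n] assoc_mult_mat[of _ ?n ?n _ ?n _ ?n])
  have colA': "col A' 0 = e \<cdot>\<^sub>v unit_vec ?n 0"
  proof -
    have "col A' 0 = (W\<^sup>T * K) *\<^sub>v col W 0" unfolding A'_def
      using W K by (intro col_mult2[of _ ?n ?n], auto)
    also have "\<dots> = W\<^sup>T *\<^sub>v (K *\<^sub>v v)" using W K v colW by auto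
    also have "\<dots> = e \<cdot>\<^sub>v (W\<^sup>T *\<^sub>v v)" using Kv W v by (simp add: mult_mat_vec[of _ ?n ?n])
    also have "W\<^sup>T *\<^sub>v v = col (W\<^sup>T * W) 0" using colW W by auto
    also have "\<dots> = unit_vec ?n 0" using WtW by simp
    finally show ?thesis .
  qed
  have A'i0: "\<And>i. i < ?n \<Longrightarrow> A' $$ (i,0) = (if i = 0 then e else 0)"
  proof -
    fix i assume i: "i < ?n"
    have "A' $$ (i,0) = col A' 0 $ i" using A' i by auto
    thus "A' $$ (i,0) = (if i = 0 then e else 0)" using colA' i by auto
  qed
  have symA'ij: "\<And>i j. i < ?n \<Longrightarrow> j < ?n \<Longrightarrow> A' $$ (i,j) = A' $$ (j,i)"
    using symA' A' by (metis carrier_matD index_transpose_mat(1))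
  define A3 where "A3 = mat m m (\<lambda>(i,j). A' $$ (Suc i, Suc j))"
  have A3: "A3 \<in> carrier_mat m m" unfolding A3_def by auto
  have symA3: "A3\<^sup>T = A3" unfolding A3_def by (rule eq_matI, auto simp: symA'ij)
  from Suc.IH[OF A3 symA3] obtain U3 d3 where U3: "U3 \<in> carrier_mat m m" and U3U3: "U3\<^sup>T * U3 = 1\<^sub>m m"
    and ld3: "length d3 = m" and A3eq: "A3 = U3 * diag_mat m (\<lambda>i. d3 ! i) * U3\<^sup>T" by auto
  define B where "B = four_block_mat (1\<^sub>m 1) (0\<^sub>m 1 m) (0\<^sub>m m 1) U3"
  have B: "B \<in> carrier_mat ?n ?n" unfolding B_def using U3 by auto
  have Bt: "B\<^sup>T = four_block_mat (1\<^sub>m 1) (0\<^sub>m 1 m) (0\<^sub>m m 1) U3\<^sup>T"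
    unfolding B_def using U3 by (subst transpose_four_block_mat, auto)
  have BtB: "B\<^sup>T * B = 1\<^sub>m ?n"
    unfolding Bt unfolding B_def using U3
    by (subst mult_four_block_mat[of _ 1 1 _ m _ m _ _ 1 _ m], auto simp: U3U3)
  define D3 where "D3 = diag_mat m (\<lambda>i. d3 ! i)"
  have D3: "D3 \<in> carrier_mat m m" unfolding D3_def diag_mat_def by auto
  define E where "E = mat 1 1 (\<lambda>_. e)"
  have E: "E \<in> carrier_mat 1 1" unfolding E_def by auto
  have Deq: "diag_mat ?n (\<lambda>i. (e # d3) ! i) = four_block_mat E (0\<^sub>m 1 m) (0\<^sub>m m 1) D3"
    unfolding D3_def E_def diag_mat_def by (rule eq_matI, auto simp: nth_Cons')
  have A'eq: "A' = four_block_mat E (0\<^sub>m 1 m) (0\<^sub>m m 1) (U3 * D3 * U3\<^sup>T)"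
    unfolding A3eq[folded D3_def, symmetric] 
    by (rule eq_matI, insert A', auto simp: E_def A3_def A'i0 symA'ij[of 0])
  have BDB: "B * diag_mat ?n (\<lambda>i. (e # d3) ! i) * B\<^sup>T = A'"
    unfolding Deq Bt A'eq unfolding B_def using U3 D3 E
    by (subst mult_four_block_mat[of _ 1 1 _ m _ m _ _ 1 _ m], auto,
        subst mult_four_block_mat[of _ 1 1 _ m _ m _ _ 1 _ m], auto)
  have Dn: "diag_mat ?n (\<lambda>i. (e # d3) ! i) \<in> carrier_mat ?n ?n" unfolding diag_mat_def by auto
  define U where "U = W * B"
  have U: "U \<in> carrier_mat ?n ?n" unfolding U_def using W B by auto
  have Ut: "U\<^sup>T = B\<^sup>T * W\<^sup>T" unfolding U_def using W B by (rule transpose_mult)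
  have "U\<^sup>T * U = B\<^sup>T * (W\<^sup>T * W) * B" unfolding Ut unfolding U_def using W B
    by (simp add: assoc_mult_mat[of _ ?n ?n _ ?n _ ?n])
  hence UtU: "U\<^sup>T * U = 1\<^sub>m ?n" using WtW BtB B by simp
  have "K = (W * W\<^sup>T) * K * (W * W\<^sup>T)" using WWt K by simp
  also have "\<dots> = W * A' * W\<^sup>T" unfolding A'_def using W K
    by (simp add: assoc_mult_mat[of _ ?n ?n _ ?n _ ?n])
  also have "\<dots> = W * (B * diag_mat ?n (\<lambda>i. (e # d3) ! i) * B\<^sup>T) * W\<^sup>T" unfolding BDB ..
  also have "\<dots> = U * diag_mat ?n (\<lambda>i. (e # d3) ! i) * U\<^sup>T" unfolding Ut unfolding U_def
    using W B Dn by (simp add: assoc_mult_mat[of _ ?n ?n _ ?n _ ?n])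
  finally show ?case using U UtU ld3 by (intro exI[of _ U] exI[of _ "e # d3"], auto)
qed


lemma diag_mat_carrier[simp]: "diag_mat n g \<in> carrier_mat n n"
  unfolding diag_mat_def by auto

lemma diag_mat_transpose[simp]: "(diag_mat n g)\<^sup>T = diag_mat n g"
  unfolding diag_mat_def by (rule eq_matI, auto)

lemma diag_mult_vec: "y \<in> carrier_vec n \<Longrightarrow> diag_mat n g *\<^sub>v y = vec n (\<lambda>i. g i * y $ i)"
proof (rule eq_vecI)
  fix i assume y: "y \<in> carrier_vec n" and i: "i < dim_vec (vec n (\<lambda>i. g i * y $ i))"
  hence i: "i < n" by simp
  have "(diag_mat n g *\<^sub>v y) $ i = (\<Sum>j\<in>{0..<n}. (if i = j then g i else 0) * y $ j)"
    using i y unfolding diag_mat_def by (auto simp: scalar_prod_def row_def)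
  also have "\<dots> = (\<Sum>j\<in>{0..<n}. if j = i then g i * y $ j else 0)"
    by (rule sum.cong, auto)
  also have "\<dots> = g i * y $ i" using i by simp
  finally show "(diag_mat n g *\<^sub>v y) $ i = vec n (\<lambda>i. g i * y $ i) $ i" using i by simp
qed (auto simp: diag_mat_def)

lemma diag_quad: "y \<in> carrier_vec n \<Longrightarrow> y \<bullet> (diag_mat n g *\<^sub>v y) = (\<Sum>i<n. g i * (y $ i)\<^sup>2)"
  by (simp add: diag_mult_vec scalar_prod_def lessThan_atLeast0 power2_eq_square algebra_simps)

lemma congr_quad:
  fixes C G :: "real mat"
  assumes C: "C \<in> carrier_mat k n" and G: "G \<in> carrier_mat k k" and x: "x \<in> carrier_vec n"
  shows "x \<bullet> ((C\<^sup>T * G * C) *\<^sub>v x) = (C *\<^sub>v x) \<bullet> (G *\<^sub>v (C *\<^sub>v x))"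
proof -
  have Ct: "C\<^sup>T \<in> carrier_mat n k" using C by auto
  have "(C\<^sup>T * G * C) *\<^sub>v x = C\<^sup>T *\<^sub>v (G *\<^sub>v (C *\<^sub>v x))"
    using C G x Ct assoc_mult_mat_vec[of "C\<^sup>T * G" n k C n x] assoc_mult_mat_vec[of "C\<^sup>T" n k G k "C *\<^sub>v x"]
    by auto
  moreover have "x \<bullet> (C\<^sup>T *\<^sub>v (G *\<^sub>v (C *\<^sub>v x))) = (C *\<^sub>v x) \<bullet> (G *\<^sub>v (C *\<^sub>v x))"
    using transpose_vec_mult_scalar[OF Ct, of "G *\<^sub>v (C *\<^sub>v x)" x] C G x by auto
  ultimately show ?thesis by simp
qed

lemma congr_quad_diag:
  fixes C :: "real mat"
  assumes C: "C \<in> carrier_mat k n" and x: "x \<in> carrier_vec n"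
  shows "x \<bullet> ((C\<^sup>T * diag_mat k g * C) *\<^sub>v x) = (\<Sum>i<k. g i * ((C *\<^sub>v x) $ i)\<^sup>2)"
  using congr_quad[OF C diag_mat_carrier x] diag_quad[where y="C *\<^sub>v x" and n=k and g=g] C x by auto

lemma proots_prod_linear: "proots (\<Prod>a\<leftarrow>d. [:- a, 1:]) = mset (d :: real list)"
proof (induction d)
  case Nil then show ?case by simp
next
  case (Cons a d)
  have nz: "(\<Prod>a\<leftarrow>d. [:- a, 1:]) \<noteq> (0 :: real poly)"
    by (auto simp: prod_list_zero_iff)
  have "proots (\<Prod>x\<leftarrow>a#d. [:- x, 1:]) = proots ([:- a, 1:] * (\<Prod>x\<leftarrow>d. [:- x, 1:]))"
    by (simp only: list.map prod_list.Cons)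
  also have "\<dots> = proots [:- a, 1:] + proots (\<Prod>x\<leftarrow>d. [:- x, 1:])"
    by (rule proots_mult, simp, fact nz)
  also have "\<dots> = mset (a # d)" unfolding Cons.IH proots_linear_factor by simp
  finally show ?case .
qed

lemma spectral_eig_sorted:
  fixes K U :: "real mat"
  assumes U: "U \<in> carrier_mat n n" and UtU: "U\<^sup>T * U = 1\<^sub>m n" and ld: "length d = n"
    and Keq: "K = U * diag_mat n (\<lambda>i. d ! i) * U\<^sup>T"
  shows "char_poly K = (\<Prod>a\<leftarrow>d. [:- a, 1:])" "eig_sorted K = sort d"
proof -
  let ?D = "diag_mat n (\<lambda>i. d ! i)"
  have Ut: "U\<^sup>T \<in> carrier_mat n n" using U by auto
  have UUt: "U * U\<^sup>T = 1\<^sub>m n" using mat_mult_left_right_inverse[OF Ut U UtU] .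
  have K: "K \<in> carrier_mat n n" using Keq U by auto
  have "similar_mat_wit K ?D U (U\<^sup>T)"
    unfolding similar_mat_wit_def Let_def using K U Ut UUt UtU Keq by auto
  hence "similar_mat K ?D" unfolding similar_mat_def by blast
  hence "char_poly K = char_poly ?D" by (rule char_poly_similar)
  also have "\<dots> = (\<Prod>a\<leftarrow>Matrix.diag_mat ?D. [:- a, 1:])"
    by (rule char_poly_upper_triangular[of _ n], auto simp: upper_triangular_def diag_mat_def)
  also have "Matrix.diag_mat ?D = d"
    unfolding Matrix.diag_mat_def using ld by (auto simp: diag_mat_def intro!: nth_equalityI)
  finally show cp: "char_poly K = (\<Prod>a\<leftarrow>d. [:- a, 1:])" .
  show "eig_sorted K = sort d" unfolding eig_sorted_def cp proots_prod_linear
    by (simp add: sorted_list_of_multiset_mset)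
qed

lemma spectral_quad:
  fixes K U :: "real mat"
  assumes U: "U \<in> carrier_mat n n" and UtU: "U\<^sup>T * U = 1\<^sub>m n" and ld: "length d = n"
    and Keq: "K = U * diag_mat n (\<lambda>i. d ! i) * U\<^sup>T" and x: "x \<in> carrier_vec n"
  shows "x \<bullet> (K *\<^sub>v x) = (\<Sum>i<n. d ! i * ((U\<^sup>T *\<^sub>v x) $ i)\<^sup>2)"
  using congr_quad_diag[where C="U\<^sup>T" and g="\<lambda>i. d ! i" and k=n and n=n and x=x] U x Keq by auto

lemma orth_sprod:
  fixes U :: "real mat"
  assumes U: "U \<in> carrier_mat n n" and UtU: "U\<^sup>T * U = 1\<^sub>m n" and x: "x \<in> carrier_vec n"
    and y: "y \<in> carrier_vec n"
  shows "x \<bullet> y = (U\<^sup>T *\<^sub>v x) \<bullet> (U\<^sup>T *\<^sub>v y)"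
proof -
  have Ut: "U\<^sup>T \<in> carrier_mat n n" using U by auto
  have UUt: "U * U\<^sup>T = 1\<^sub>m n" using mat_mult_left_right_inverse[OF Ut U UtU] .
  have "y = U *\<^sub>v (U\<^sup>T *\<^sub>v y)" using UUt U Ut y
    by (metis assoc_mult_mat_vec one_mult_mat_vec)
  hence "x \<bullet> y = x \<bullet> (U *\<^sub>v (U\<^sup>T *\<^sub>v y))" by simp
  also have "\<dots> = (U\<^sup>T *\<^sub>v x) \<bullet> (U\<^sup>T *\<^sub>v y)"
    using transpose_vec_mult_scalar[OF U, of "U\<^sup>T *\<^sub>v y" x] U x y by auto
  finally show ?thesis .
qed


lemma sorted_le_last: "sorted s \<Longrightarrow> (a::real) \<in> set s \<Longrightarrow> a \<le> last s"
proof -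
  assume s: "sorted s" and a: "a \<in> set s"
  then obtain k where k: "k < length s" "s ! k = a" by (auto simp: in_set_conv_nth)
  have "last s = s ! (length s - 1)" using k by (intro last_conv_nth, auto)
  thus ?thesis using sorted_nth_mono[OF s, of k "length s - 1"] k by auto
qed

lemma two_below_second:
  fixes d :: "real list"
  assumes i: "i < length d" and j: "j < length d" and ij: "i \<noteq> j"
    and di: "d ! i < sort d ! 1" and dj: "d ! j < sort d ! 1"
  shows False
proof -
  let ?s = "sort d"
  let ?P = "\<lambda>a. a < ?s ! 1"
  have "length (filter ?P d) = length (filter ?P ?s)"
    by (simp add: filter_sort)
  moreover have "length (filter ?P d) \<ge> 2"
  proof -
    have "{i, j} \<subseteq> {k. k < length d \<and> ?P (d ! k)}" using i j di dj by auto
    hence "card {i, j} \<le> card {k. k < length d \<and> ?P (d ! k)}" by (intro card_mono, auto)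
    thus ?thesis using ij by (simp add: length_filter_conv_card)
  qed
  moreover have "length (filter ?P ?s) \<le> 1"
  proof -
    have ss: "sorted ?s" by simp
    have "{k. k < length ?s \<and> ?P (?s ! k)} \<subseteq> {0}"
    proof
      fix k assume k: "k \<in> {k. k < length ?s \<and> ?P (?s ! k)}"
      show "k \<in> {0}"
      proof (rule ccontr)
        assume "k \<notin> {0}"
        hence "1 \<le> k" by auto
        hence "?s ! 1 \<le> ?s ! k" using k by (intro sorted_nth_mono[OF ss], auto)
        thus False using k by auto
      qed
    qed
    hence "card {k. k < length ?s \<and> ?P (?s ! k)} \<le> card {0::nat}" by (intro card_mono, auto)
    thus ?thesis by (simp add: length_filter_conv_card)
  qed
  ultimately show False by simp
qed

lemma sprod_self_sum: "(y::real vec) \<in> carrier_vec n \<Longrightarrow> y \<bullet> y = (\<Sum>i<n. (y $ i)\<^sup>2)"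
  unfolding scalar_prod_def lessThan_atLeast0 by (intro sum.cong, auto simp: power2_eq_square)

lemma rayleigh_upper:
  fixes K :: "real mat"
  assumes K: "K \<in> carrier_mat n n" and sym: "K\<^sup>T = K" and x: "x \<in> carrier_vec n"
  shows "x \<bullet> (K *\<^sub>v x) \<le> last (eig_sorted K) * (x \<bullet> x)"
proof -
  obtain U d where U: "U \<in> carrier_mat n n" and UtU: "U\<^sup>T * U = 1\<^sub>m n" and ld: "length d = n"
    and Keq: "K = U * diag_mat n (\<lambda>i. d ! i) * U\<^sup>T" using spectral_real[OF K sym] by blast
  have es: "eig_sorted K = sort d" using spectral_eig_sorted[OF U UtU ld Keq] by simp
  define y where "y = U\<^sup>T *\<^sub>v x"
  have y: "y \<in> carrier_vec n" unfolding y_def using U x by auto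
  have q: "x \<bullet> (K *\<^sub>v x) = (\<Sum>i<n. d ! i * (y $ i)\<^sup>2)"
    unfolding y_def using spectral_quad[OF U UtU ld Keq x] .
  have xx: "x \<bullet> x = (\<Sum>i<n. (y $ i)\<^sup>2)"
    using orth_sprod[OF U UtU x x] sprod_self_sum[OF y] unfolding y_def by simp
  have le: "\<And>i. i < n \<Longrightarrow> d ! i \<le> last (sort d)"
    using ld by (intro sorted_le_last, auto)
  have "(\<Sum>i<n. d ! i * (y $ i)\<^sup>2) \<le> (\<Sum>i<n. last (sort d) * (y $ i)\<^sup>2)"
    by (rule sum_mono, rule mult_right_mono, auto simp: le)
  thus ?thesis unfolding q xx es by (simp add: sum_distrib_left)
qed

lemma rayleigh_lower:
  fixes K :: "real mat"
  assumes K: "K \<in> carrier_mat n n" and sym: "K\<^sup>T = K"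
    and psd: "\<And>u. u \<in> carrier_vec n \<Longrightarrow> u \<bullet> (K *\<^sub>v u) \<ge> 0"
    and v0: "v0 \<in> carrier_vec n" "v0 \<noteq> 0\<^sub>v n" and Kv0: "K *\<^sub>v v0 = 0\<^sub>v n"
    and x: "x \<in> carrier_vec n" and xv0: "x \<bullet> v0 = 0"
  shows "(eig_sorted K ! 1) * (x \<bullet> x) \<le> x \<bullet> (K *\<^sub>v x)"
proof -
  obtain U d where U: "U \<in> carrier_mat n n" and UtU: "U\<^sup>T * U = 1\<^sub>m n" and ld: "length d = n"
    and Keq: "K = U * diag_mat n (\<lambda>i. d ! i) * U\<^sup>T" using spectral_real[OF K sym] by blast
  have es: "eig_sorted K = sort d" using spectral_eig_sorted[OF U UtU ld Keq] by simp
  define l2 where "l2 = sort d ! 1"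
  have Ut: "U\<^sup>T \<in> carrier_mat n n" using U by auto
  define y where "y = U\<^sup>T *\<^sub>v x"
  have y: "y \<in> carrier_vec n" unfolding y_def using U x by auto
  define z where "z = U\<^sup>T *\<^sub>v v0"
  have z: "z \<in> carrier_vec n" unfolding z_def using U v0 by auto
  have q: "x \<bullet> (K *\<^sub>v x) = (\<Sum>i<n. d ! i * (y $ i)\<^sup>2)"
    unfolding y_def using spectral_quad[OF U UtU ld Keq x] .
  have xx: "x \<bullet> x = (\<Sum>i<n. (y $ i)\<^sup>2)"
    using orth_sprod[OF U UtU x x] sprod_self_sum[OF y] unfolding y_def by simp
  have dnn: "\<And>i. i < n \<Longrightarrow> d ! i \<ge> 0"
  proof -
    fix i assume i: "i < n"
    define u where "u = U *\<^sub>v unit_vec n i"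
    have u: "u \<in> carrier_vec n" unfolding u_def using U by auto
    have "U\<^sup>T *\<^sub>v u = unit_vec n i" unfolding u_def using U Ut UtU
      by (metis assoc_mult_mat_vec one_mult_mat_vec unit_vec_carrier)
    hence "u \<bullet> (K *\<^sub>v u) = (\<Sum>j<n. d ! j * ((unit_vec n i) $ j)\<^sup>2)"
      using spectral_quad[OF U UtU ld Keq u] by simp
    also have "\<dots> = (\<Sum>j<n. if j = i then d ! i else 0)"
      by (rule sum.cong, auto simp: unit_vec_def)
    also have "\<dots> = d ! i" using i by simp
    finally show "d ! i \<ge> 0" using psd[OF u] by simp
  qed
  have "(\<Sum>i<n. d ! i * (z $ i)\<^sup>2) = v0 \<bullet> (K *\<^sub>v v0)"
    unfolding z_def using spectral_quad[OF U UtU ld Keq v0(1)] by simp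
  also have "\<dots> = 0" using Kv0 v0 by simp
  finally have "(\<Sum>i<n. d ! i * (z $ i)\<^sup>2) = 0" .
  hence dz0: "\<And>i. i < n \<Longrightarrow> d ! i * (z $ i)\<^sup>2 = 0"
    using sum_nonneg_eq_0_iff[of "{..<n}" "\<lambda>i. d ! i * (z $ i)\<^sup>2"] dnn by auto
  have "y \<bullet> z = 0" using orth_sprod[OF U UtU x v0(1)] xv0 unfolding y_def z_def by simp
  hence yz: "(\<Sum>i<n. y $ i * z $ i) = 0"
    unfolding scalar_prod_def lessThan_atLeast0 using z by simp
  have "z \<bullet> z = v0 \<bullet> v0" using orth_sprod[OF U UtU v0(1) v0(1)] unfolding z_def by simp
  hence "z \<bullet> z > 0" using real_sprod_pos[OF v0(1,2)] by simp
  hence z0: "z \<noteq> 0\<^sub>v n" using z by auto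
  have termw: "\<And>i. i < n \<Longrightarrow> l2 * (y $ i)\<^sup>2 \<le> d ! i * (y $ i)\<^sup>2"
  proof -
    fix i assume i: "i < n"
    show "l2 * (y $ i)\<^sup>2 \<le> d ! i * (y $ i)\<^sup>2"
    proof (cases "l2 \<le> d ! i")
      case True thus ?thesis by (intro mult_right_mono, auto)
    next
      case False
      hence di: "d ! i < l2" by simp
      have others: "\<And>j. j < n \<Longrightarrow> j \<noteq> i \<Longrightarrow> z $ j = 0"
      proof -
        fix j assume j: "j < n" "j \<noteq> i"
        have "\<not> d ! j < l2" using two_below_second[of i d j] i j di ld unfolding l2_def by auto
        hence "d ! j > 0" using di dnn[OF i] by simp
        thus "z $ j = 0" using dz0[OF j(1)] by simp
      qed
      have "(\<Sum>j<n. y $ j * z $ j) = (\<Sum>j<n. if j = i then y $ i * z $ i else 0)"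
        by (rule sum.cong, auto simp: others)
      hence yizi: "y $ i * z $ i = 0" using yz i by simp
      have "z $ i \<noteq> 0"
      proof
        assume "z $ i = 0"
        hence "z = 0\<^sub>v n" using others z by (intro eq_vecI, auto)
        thus False using z0 by simp
      qed
      hence "y $ i = 0" using yizi by simp
      thus ?thesis by simp
    qed
  qed
  have "(\<Sum>i<n. l2 * (y $ i)\<^sup>2) \<le> (\<Sum>i<n. d ! i * (y $ i)\<^sup>2)"
    by (rule sum_mono, rule termw, auto)
  thus ?thesis unfolding q xx es l2_def[symmetric] by (simp add: sum_distrib_left)
qed



lemma mm_assoc: "dim_col A = dim_row B \<Longrightarrow> dim_col B = dim_row C \<Longrightarrow> (A * B) * C = A * (B * (C :: 'a :: semiring_0 mat))"
  by (rule assoc_mult_mat[of A "dim_row A" "dim_col A" B "dim_col B" C "dim_col C"]; rule carrier_matI; simp)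

lemma mv_assoc: "dim_col A = dim_row B \<Longrightarrow> dim_col B = dim_vec x \<Longrightarrow> (A * B) *\<^sub>v x = A *\<^sub>v (B *\<^sub>v (x :: 'a :: semiring_0 vec))"
  by (rule assoc_mult_mat_vec[of A "dim_row A" "dim_col A" B "dim_col B" x]; (rule carrier_matI carrier_vecI); simp)

lemma mt: "dim_col A = dim_row B \<Longrightarrow> (A * B)\<^sup>T = B\<^sup>T * (A\<^sup>T :: 'a :: comm_semiring_0 mat)"
  by (rule transpose_mult[of A "dim_row A" "dim_col A" B "dim_col B"]; rule carrier_matI; simp)

lemma sprod_tr: "dim_vec u = dim_row P \<Longrightarrow> dim_vec x = dim_col P \<Longrightarrow> x \<bullet> (P\<^sup>T *\<^sub>v u) = (P *\<^sub>v x) \<bullet> (u :: 'a :: comm_semiring_0 vec)"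
proof -
  assume u: "dim_vec u = dim_row P" and x: "dim_vec x = dim_col P"
  have "(P *\<^sub>v x) \<bullet> u = u \<bullet> (P *\<^sub>v x)"
    by (rule comm_scalar_prod[of _ "dim_row P"], insert u, auto intro: carrier_vecI)
  also have "\<dots> = (P\<^sup>T *\<^sub>v u) \<bullet> x"
    by (rule transpose_vec_mult_scalar[symmetric, of P "dim_row P" "dim_col P"], insert u x, auto intro: carrier_vecI carrier_matI)
  also have "\<dots> = x \<bullet> (P\<^sup>T *\<^sub>v u)"
    by (rule comm_scalar_prod[of _ "dim_col P"], insert u x, auto intro: carrier_vecI)
  finally show ?thesis by simp
qed

lemma smult_one_mult_vec: "x \<in> carrier_vec n \<Longrightarrow> (c \<cdot>\<^sub>m 1\<^sub>m n) *\<^sub>v x = (c::real) \<cdot>\<^sub>v x"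
proof -
  assume x: "x \<in> carrier_vec n"
  have "(c \<cdot>\<^sub>m 1\<^sub>m n) = diag_mat n (\<lambda>_. c)" unfolding diag_mat_def by (rule eq_matI, auto)
  thus ?thesis using diag_mult_vec[OF x, of "\<lambda>_. c"] x by (auto intro!: eq_vecI)
qed

lemma diag_mat_cong: "(\<And>i. i < n \<Longrightarrow> f i = g i) \<Longrightarrow> diag_mat n f = diag_mat n g"
  unfolding diag_mat_def by (rule eq_matI, auto)

lemma diag_mult: "diag_mat n f * diag_mat n g = diag_mat n (\<lambda>i. f i * g i)"
proof (rule eq_matI)
  fix i j assume i: "i < dim_row (diag_mat n (\<lambda>i. f i * g i))" and j: "j < dim_col (diag_mat n (\<lambda>i. f i * g i))"
  hence i: "i < n" and j: "j < n" by (auto simp: diag_mat_def)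
  have "(diag_mat n f * diag_mat n g) $$ (i,j) = (\<Sum>k\<in>{0..<n}. (if i = k then f i else 0) * (if k = j then g k else 0))"
    using i j unfolding diag_mat_def by (auto simp: scalar_prod_def row_def col_def)
  also have "\<dots> = (\<Sum>k\<in>{0..<n}. if k = i then (if i = j then f i * g i else 0) else 0)"
    by (rule sum.cong, auto)
  also have "\<dots> = diag_mat n (\<lambda>i. f i * g i) $$ (i,j)" using i j unfolding diag_mat_def by simp
  finally show "(diag_mat n f * diag_mat n g) $$ (i,j) = diag_mat n (\<lambda>i. f i * g i) $$ (i,j)" .
qed (auto simp: diag_mat_def)

lemma psd_diff:
  fixes P Q :: "real mat"
  assumes P: "P \<in> carrier_mat n n" and Q: "Q \<in> carrier_mat n n"
    and Ps: "P\<^sup>T = P" and Qs: "Q\<^sup>T = Q"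
    and le: "\<And>x. x \<in> carrier_vec n \<Longrightarrow> x \<bullet> (P *\<^sub>v x) \<le> x \<bullet> (Q *\<^sub>v x)"
  shows "loewner_le n P Q"
  unfolding loewner_le_def psd_def
proof (intro conjI ballI)
  show "Q - P \<in> carrier_mat n n" using P Q by auto
  show "(Q - P)\<^sup>T = Q - P" using transpose_minus[OF Q P] Ps Qs by simp
  fix x :: "real vec" assume x: "x \<in> carrier_vec n"
  have "x \<bullet> ((Q - P) *\<^sub>v x) = x \<bullet> (Q *\<^sub>v x) - x \<bullet> (P *\<^sub>v x)"
    using minus_mult_distrib_mat_vec[OF Q P x] scalar_prod_minus_distrib[of x n] P Q x by auto
  thus "0 \<le> x \<bullet> ((Q - P) *\<^sub>v x)" using le[OF x] by simp
qed

lemma incidence_dims[simp]: "dim_row (incidence N es) = N" "dim_col (incidence N es) = length es"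
  unfolding incidence_def by auto

lemma diag_dims[simp]: "dim_row (diag_mat n g) = n" "dim_col (diag_mat n g) = n"
  unfolding diag_mat_def by auto

lemma incidence_col_sum:
  assumes sg: "simple_graph N es"
  shows "(incidence N es)\<^sup>T *\<^sub>v vec N (\<lambda>_. 1) = 0\<^sub>v (length es)"
proof (rule eq_vecI)
  fix l assume "l < dim_vec (0\<^sub>v (length es) :: real vec)"
  hence l: "l < length es" by simp
  define a where "a = fst (es ! l)"
  define b where "b = snd (es ! l)"
  have ab: "a < N" "b < N" "a \<noteq> b" using sg l unfolding simple_graph_def a_def b_def by auto
  have "((incidence N es)\<^sup>T *\<^sub>v vec N (\<lambda>_. 1)) $ l =
     (\<Sum>i\<in>{0..<N}. (if i = a then 1 else if i = b then -1 else 0))"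
    using l unfolding incidence_def a_def b_def by (auto simp: scalar_prod_def row_def)
  also have "\<dots> = (\<Sum>i\<in>{0..<N}. (if i = a then 1 else 0) - (if i = b then 1 else (0::real)))"
    using ab by (intro sum.cong, auto)
  also have "\<dots> = 0" using ab by (simp add: sum_subtractf)
  finally show "((incidence N es)\<^sup>T *\<^sub>v vec N (\<lambda>_. 1)) $ l = 0\<^sub>v (length es) $ l" using l by simp
qed simp


lemma mat_vec_zero: "dim_col M = n \<Longrightarrow> M *\<^sub>v 0\<^sub>v n = (0\<^sub>v (dim_row M) :: real vec)"
  by (intro eq_vecI, auto simp: scalar_prod_def)

lemma diag_one: "diag_mat n (\<lambda>_. 1) = 1\<^sub>m n"
  unfolding diag_mat_def by (rule eq_matI, auto)

theorem lemmaD2: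
  fixes N :: nat and es :: "(nat \<times> nat) list" and w m :: "nat \<Rightarrow> real"
    and Y :: "real mat" and \<rho> :: real and th :: "real vec"
  assumes "N \<ge> 1"
    and "simple_graph N es" and "graph_connected N es"
    and "\<forall>l < length es. w l > 0"
    and "\<forall>i < N. m i > 0"
    and "Y \<in> carrier_mat N (N - 1)"
    and "Y\<^sup>T * Y = 1\<^sub>m (N - 1)"
    and "Y\<^sup>T * Mhalf N m *\<^sub>v (vec N (\<lambda>_. 1)) = 0\<^sub>v (N - 1)"
    and "0 < \<rho>" and "\<rho> < pi / 2"
    and "th \<in> S_rho N es m Y \<rho>"
  shows "loewner_le (N - 1)
           ((sin \<rho> * eig_sorted (Minv N m * laplB N es w) ! 1) \<cdot>\<^sub>m 1\<^sub>m (N - 1))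
           (hessU N es w m Y th)
       \<and> loewner_le (N - 1) (hessU N es w m Y th)
           (last (eig_sorted (Minv N m * laplB N es w)) \<cdot>\<^sub>m 1\<^sub>m (N - 1))"
proof -
  note N1 = assms(1) and sg = assms(2) and wpos = assms(4) and mpos = assms(5)
    and Y = assms(6) and YtY = assms(7) and Yv = assms(8) and rho0 = assms(9) and rho1 = assms(10)
    and th = assms(11)
  define E where "E = length es"
  define A where "A = incidence N es"
  define Mm where "Mm = Mmhalf N m"
  define Mh where "Mh = Mhalf N m"
  define G where "G = diag_mat E w"
  define L where "L = laplB N es w"
  define K where "K = Mm * L * Mm"
  define C0 where "C0 = A\<^sup>T * Mm"
  define C where "C = A\<^sup>T * Mm * Y"
  define phi where "phi = C *\<^sub>v th"
  define Dc where "Dc = diag_mat E (\<lambda>l. w l * cos (phi $ l))"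
  define H where "H = hessU N es w m Y th"
  have dA: "dim_row A = N" "dim_col A = E" unfolding A_def E_def by auto
  have dMm: "dim_row Mm = N" "dim_col Mm = N" unfolding Mm_def Mmhalf_def by auto
  have dMh: "dim_row Mh = N" "dim_col Mh = N" unfolding Mh_def Mhalf_def by auto
  have dY: "dim_row Y = N" "dim_col Y = N - 1" using Y by auto
  have dG: "dim_row G = E" "dim_col G = E" unfolding G_def by auto
  have dDc: "dim_row Dc = E" "dim_col Dc = E" unfolding Dc_def by auto
  have MmT: "Mm\<^sup>T = Mm" unfolding Mm_def Mmhalf_def by simp
  have MhT: "Mh\<^sup>T = Mh" unfolding Mh_def Mhalf_def by simp
  have GT: "G\<^sup>T = G" unfolding G_def by simp
  have DcT: "Dc\<^sup>T = Dc" unfolding Dc_def by simp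
  have Ldef: "L = A * G * A\<^sup>T" unfolding L_def laplB_def A_def G_def Gam_def E_def ..
  have Hform: "H = C\<^sup>T * Dc * C"
    unfolding H_def hessU_def Let_def Dc_def phi_def C_def A_def[symmetric] Mm_def[symmetric] E_def[symmetric]
    by (simp add: mt mm_assoc dA dMm dY dDc MmT flip: Dc_def)
  have Kform: "K = C0\<^sup>T * G * C0"
    unfolding K_def Ldef C0_def by (simp add: mt mm_assoc dA dMm dG MmT)
  have C: "C \<in> carrier_mat E (N - 1)" unfolding C_def using dA dMm dY by (auto intro!: carrier_matI)
  have C0: "C0 \<in> carrier_mat E N" unfolding C0_def using dA dMm by (auto intro!: carrier_matI)
  have K: "K \<in> carrier_mat N N" unfolding Kform using C0 dG by (auto intro!: carrier_matI)
  have KT: "K\<^sup>T = K" unfolding Kform by (simp add: mt C0_def dA dMm dG GT MmT mm_assoc)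
  have H: "H \<in> carrier_mat (N - 1) (N - 1)" unfolding Hform using C dDc by (auto intro!: carrier_matI)
  have HT: "H\<^sup>T = H" unfolding Hform using C by (simp add: mt dDc DcT mm_assoc)
  have qK: "\<And>u. u \<in> carrier_vec N \<Longrightarrow> u \<bullet> (K *\<^sub>v u) = (\<Sum>l<E. w l * ((C0 *\<^sub>v u) $ l)\<^sup>2)"
    unfolding Kform G_def by (rule congr_quad_diag[OF C0])
  have qH: "\<And>x. x \<in> carrier_vec (N - 1) \<Longrightarrow> x \<bullet> (H *\<^sub>v x) = (\<Sum>l<E. (w l * cos (phi $ l)) * ((C *\<^sub>v x) $ l)\<^sup>2)"
    unfolding Hform Dc_def by (rule congr_quad_diag[OF C])
  have psdK: "\<And>u. u \<in> carrier_vec N \<Longrightarrow> u \<bullet> (K *\<^sub>v u) \<ge> 0"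
    using wpos unfolding E_def[symmetric] by (auto simp: qK intro!: sum_nonneg)
  define one where "one = vec N (\<lambda>_. 1::real)"
  define v0 where "v0 = Mh *\<^sub>v one"
  have v0: "v0 \<in> carrier_vec N" unfolding v0_def using dMh by (auto intro!: carrier_vecI)
  have v0e: "v0 = vec N (\<lambda>i. sqrt (m i))" unfolding v0_def one_def Mh_def Mhalf_def
    by (subst diag_mult_vec, auto)
  have v0nz: "v0 \<noteq> 0\<^sub>v N"
  proof
    assume "v0 = 0\<^sub>v N"
    hence "v0 $ 0 = 0" using N1 by simp
    moreover have "m 0 > 0" using mpos N1 by simp
    ultimately show False using v0e N1 by simp
  qed
  have Mmv0: "Mm *\<^sub>v v0 = one" unfolding v0e Mm_def Mmhalf_def one_def
    by (subst diag_mult_vec, force, rule eq_vecI, insert mpos, auto simp: less_le)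
  have C0v0: "C0 *\<^sub>v v0 = 0\<^sub>v E"
    unfolding C0_def using incidence_col_sum[OF sg] v0
    by (simp add: mv_assoc dA dMm Mmv0 one_def A_def E_def)
  have Kv0: "K *\<^sub>v v0 = 0\<^sub>v N" unfolding Kform using C0 v0
    by (simp add: mv_assoc dG C0v0 mat_vec_zero)
  have MmMh: "Mm * Mh = 1\<^sub>m N" unfolding Mm_def Mh_def Mmhalf_def Mhalf_def diag_mult
    by (subst diag_mat_cong[of _ _ "\<lambda>_. 1"], insert mpos, auto simp: diag_one)
  have MhMm: "Mh * Mm = 1\<^sub>m N" unfolding Mm_def Mh_def Mmhalf_def Mhalf_def diag_mult
    by (subst diag_mat_cong[of _ _ "\<lambda>_. 1"], insert mpos, auto simp: diag_one)
  have Minv: "Minv N m = Mm * Mm" unfolding Mm_def Minv_def Mmhalf_def diag_mult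
    by (rule diag_mat_cong, insert mpos, auto simp: real_sqrt_mult[symmetric])
  have dL: "dim_row L = N" "dim_col L = N" unfolding Ldef using dA dG by auto
  have "Minv N m * L = Mm * K * Mh"
    unfolding Minv K_def by (simp add: mm_assoc dMm dMh dL MmMh)
  hence "similar_mat_wit (Minv N m * L) K Mm Mh"
    unfolding similar_mat_wit_def Let_def using K MmMh MhMm dMm dMh dL
    by (auto intro!: carrier_matI)
  hence "char_poly (Minv N m * L) = char_poly K"
    by (intro char_poly_similar, auto simp: similar_mat_def)
  hence eigeq: "eig_sorted (Minv N m * L) = eig_sorted K" unfolding eig_sorted_def by simp
  have phib: "\<And>l. l < E \<Longrightarrow> \<bar>phi $ l\<bar> < pi / 2 - \<rho>"
    using th unfolding S_rho_def phi_def C_def A_def Mm_def E_def by auto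
  have cosb: "\<And>l. l < E \<Longrightarrow> sin \<rho> \<le> cos (phi $ l) \<and> cos (phi $ l) \<le> 1"
  proof -
    fix l assume l: "l < E"
    have "cos (pi / 2 - \<rho>) \<le> cos \<bar>phi $ l\<bar>"
      using phib[OF l] rho0 rho1 by (intro cos_monotone_0_pi_le, auto)
    thus "sin \<rho> \<le> cos (phi $ l) \<and> cos (phi $ l) \<le> 1" by (simp add: cos_diff)
  qed
  have sinpos: "sin \<rho> \<ge> 0" using rho0 rho1 by (intro sin_ge_zero, auto)
  have cmp: "\<And>x. x \<in> carrier_vec (N - 1) \<Longrightarrow>
      sin \<rho> * (eig_sorted K ! 1) * (x \<bullet> x) \<le> x \<bullet> (H *\<^sub>v x) \<and>
      x \<bullet> (H *\<^sub>v x) \<le> last (eig_sorted K) * (x \<bullet> x)"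
  proof -
    fix x :: "real vec" assume x: "x \<in> carrier_vec (N - 1)"
    define u where "u = Y *\<^sub>v x"
    have u: "u \<in> carrier_vec N" unfolding u_def using dY by (intro carrier_vecI, simp)
    have C0u: "C0 *\<^sub>v u = C *\<^sub>v x" unfolding u_def C_def C0_def using x
      by (simp add: mv_assoc dA dMm dY)
    have uu: "u \<bullet> u = x \<bullet> x"
    proof -
      have "x \<bullet> (Y\<^sup>T *\<^sub>v u) = u \<bullet> u" unfolding u_def using x by (subst sprod_tr, auto simp: dY)
      moreover have "Y\<^sup>T *\<^sub>v u = x" unfolding u_def using x YtY by (simp add: mv_assoc[symmetric] dY)
      ultimately show ?thesis by simp
    qed
    have uv0: "u \<bullet> v0 = 0"
    proof -
      have "x \<bullet> (Y\<^sup>T *\<^sub>v v0) = u \<bullet> v0" unfolding u_def using x v0 by (subst sprod_tr, auto simp: dY)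
      moreover have "Y\<^sup>T *\<^sub>v v0 = 0\<^sub>v (N - 1)" using Yv unfolding v0_def one_def Mh_def[symmetric]
        by (simp add: mv_assoc dY dMh)
      ultimately show ?thesis using x by simp
    qed
    have qKu: "u \<bullet> (K *\<^sub>v u) = (\<Sum>l<E. w l * ((C *\<^sub>v x) $ l)\<^sup>2)" using qK[OF u] C0u by simp
    have "x \<bullet> (H *\<^sub>v x) \<le> (\<Sum>l<E. w l * ((C *\<^sub>v x) $ l)\<^sup>2)"
      unfolding qH[OF x]
    proof (rule sum_mono)
      fix l assume "l \<in> {..<E}"
      hence l: "l < E" by simp
      have "w l * cos (phi $ l) \<le> w l" using cosb[OF l] wpos l unfolding E_def
        by (simp add: mult_left_le)
      thus "w l * cos (phi $ l) * ((C *\<^sub>v x) $ l)\<^sup>2 \<le> w l * ((C *\<^sub>v x) $ l)\<^sup>2"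
        by (intro mult_right_mono, auto)
    qed
    also have "\<dots> = u \<bullet> (K *\<^sub>v u)" using qKu by simp
    also have "\<dots> \<le> last (eig_sorted K) * (u \<bullet> u)" by (rule rayleigh_upper[OF K KT u])
    finally have up: "x \<bullet> (H *\<^sub>v x) \<le> last (eig_sorted K) * (x \<bullet> x)" unfolding uu .
    have "sin \<rho> * (eig_sorted K ! 1) * (x \<bullet> x) = sin \<rho> * ((eig_sorted K ! 1) * (u \<bullet> u))"
      unfolding uu by simp
    also have "\<dots> \<le> sin \<rho> * (u \<bullet> (K *\<^sub>v u))"
      by (rule mult_left_mono[OF rayleigh_lower[OF K KT psdK v0 v0nz Kv0 u uv0] sinpos])
    also have "\<dots> = (\<Sum>l<E. sin \<rho> * w l * ((C *\<^sub>v x) $ l)\<^sup>2)"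
      unfolding qKu sum_distrib_left by (simp add: mult.assoc)
    also have "\<dots> \<le> x \<bullet> (H *\<^sub>v x)"
      unfolding qH[OF x]
    proof (rule sum_mono)
      fix l assume "l \<in> {..<E}"
      hence l: "l < E" by simp
      have "sin \<rho> * w l \<le> w l * cos (phi $ l)" using cosb[OF l] wpos l unfolding E_def
        by (simp add: mult.commute mult_left_mono less_imp_le)
      thus "sin \<rho> * w l * ((C *\<^sub>v x) $ l)\<^sup>2 \<le> w l * cos (phi $ l) * ((C *\<^sub>v x) $ l)\<^sup>2"
        by (intro mult_right_mono, auto)
    qed
    finally show "sin \<rho> * (eig_sorted K ! 1) * (x \<bullet> x) \<le> x \<bullet> (H *\<^sub>v x) \<and>
      x \<bullet> (H *\<^sub>v x) \<le> last (eig_sorted K) * (x \<bullet> x)" using up by simp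
  qed
  have smI: "\<And>c. (c \<cdot>\<^sub>m 1\<^sub>m (N - 1) :: real mat) \<in> carrier_mat (N - 1) (N - 1)" by auto
  have smT: "\<And>c. (c \<cdot>\<^sub>m 1\<^sub>m (N - 1) :: real mat)\<^sup>T = c \<cdot>\<^sub>m 1\<^sub>m (N - 1)" by (rule eq_matI, auto)
  have smq: "\<And>c x. x \<in> carrier_vec (N - 1) \<Longrightarrow> x \<bullet> ((c \<cdot>\<^sub>m 1\<^sub>m (N - 1)) *\<^sub>v x) = (c::real) * (x \<bullet> x)"
  proof -
    fix c :: real and x :: "real vec" assume x: "x \<in> carrier_vec (N - 1)"
    have "(c \<cdot>\<^sub>m 1\<^sub>m (N - 1)) *\<^sub>v x = c \<cdot>\<^sub>v x" by (rule smult_one_mult_vec[OF x])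
    thus "x \<bullet> ((c \<cdot>\<^sub>m 1\<^sub>m (N - 1)) *\<^sub>v x) = c * (x \<bullet> x)" using x by simp
  qed
  have part1: "loewner_le (N - 1) ((sin \<rho> * eig_sorted K ! 1) \<cdot>\<^sub>m 1\<^sub>m (N - 1)) H"
  proof (rule psd_diff[OF smI H smT HT])
    fix x :: "real vec" assume x: "x \<in> carrier_vec (N - 1)"
    show "x \<bullet> (((sin \<rho> * eig_sorted K ! 1) \<cdot>\<^sub>m 1\<^sub>m (N - 1)) *\<^sub>v x) \<le> x \<bullet> (H *\<^sub>v x)"
      unfolding smq[OF x] using cmp[OF x] by simp
  qed
  have part2: "loewner_le (N - 1) H (last (eig_sorted K) \<cdot>\<^sub>m 1\<^sub>m (N - 1))"
  proof (rule psd_diff[OF H smI HT smT])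
    fix x :: "real vec" assume x: "x \<in> carrier_vec (N - 1)"
    show "x \<bullet> (H *\<^sub>v x) \<le> x \<bullet> ((last (eig_sorted K) \<cdot>\<^sub>m 1\<^sub>m (N - 1)) *\<^sub>v x)"
      unfolding smq[OF x] using cmp[OF x] by simp
  qed
  show ?thesis using part1 part2 unfolding eigeq[unfolded L_def] H_def by (rule conjI)
qed

end
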